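(* Near linear Zarankiewicz bounds are preserved under local trace definability: if a structure $\mathcal{N}$ has near linear Zarankiewicz bounds and $\mathcal{N}$ locally trace defines a structure $\mathcal{M}$, then $\mathcal{M}$ has near linear Zarankiewicz bounds.
   Context: "Definable" means with parameters. $\mathcal{N}$ locally trace defines $\mathcal{M}$ if there is a possibly infinite collection $\mathcal{E}$ of functions $M\to N$ such that every $\mathcal{M}$-definable subset of every $M^m$ is of the form $\{(a_1,\dots,a_m) : (f_1(a_{i_1}),\dots,f_n(a_{i_n}))\in Y\}$ for some $f_1,\dots,f_n\in\mathcal{E}$, $i_1,\dots,i_n\in\{1,\dots,m\}$ and $\mathcal{N}$-definable $Y\subseteq N^n$. A bipartite graph with sorts $V,W$ and edges $E\subseteq V\times W$ is $K_{m,n}$-free if it contains no complete bipartite subgraph with parts of size $m,n$. A class $\mathcal{C}$ of finite bipartite graphs has near linear Zarankiewicz bounds if for every $m$ and real $\varepsilon>0$ there is real $\lambda>0$ with every $K_{m,m}$-free $\mathcal{G}\in\mathcal{C}$ having at most $\lambda|\mathcal{G}|^{1+\varepsilon}$ edges ($|\mathcal{G}|$ the number of vertices). A bipartite graph has near linear Zarankiewicz bounds if the class of its finite substructures does, and a structure has them if every bipartite graph definable in it does (equivalently, this holds in every model of its theory). *)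

theory Defs
  imports Complex_Main
begin

text \<open>A first-order structure with universe the type 'a is represented by the family
of its definable (with parameters) sets: D m is the collection of definable subsets of
M^m, tuples being lists of length m.  The closure conditions below are exactly those
satisfied by the definable-with-parameters sets of a structure, and conversely any such
family is the family of definable sets of the structure naming each of its members.\<close>

definition tuples :: "nat \<Rightarrow> 'a list set" where
  "tuples m = {xs. length xs = m}"

definition is_structure :: "(nat \<Rightarrow> 'a list set set) \<Rightarrow> bool" where
  "is_structure D \<longleftrightarrow>
     (\<forall>m. \<forall>X\<in>D m. X \<subseteq> tuples m)
   \<and> (\<forall>m. tuples m \<in> D m)
   \<and> (\<forall>m. \<forall>X\<in>D m. tuples m - X \<in> D m)
   \<and> (\<forall>m. \<forall>X\<in>D m. \<forall>Y\<in>D m. X \<inter> Y \<in> D m)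
   \<and> (\<forall>m n (\<sigma>::nat \<Rightarrow> nat). \<forall>X\<in>D m. (\<forall>j<m. \<sigma> j < n) \<longrightarrow>
        {ys \<in> tuples n. map (\<lambda>j. ys ! \<sigma> j) [0..<m] \<in> X} \<in> D n)
   \<and> (\<forall>m. \<forall>X\<in>D (Suc m). {xs \<in> tuples m. \<exists>a. xs @ [a] \<in> X} \<in> D m)
   \<and> {[x, x] | x. True} \<in> D 2
   \<and> (\<forall>a. {[a]} \<in> D 1)"

definition locally_trace_defines ::
  "(nat \<Rightarrow> 'b list set set) \<Rightarrow> (nat \<Rightarrow> 'a list set set) \<Rightarrow> bool" where
  "locally_trace_defines DN DM \<longleftrightarrow>
     (\<exists>Es :: ('a \<Rightarrow> 'b) set.
        \<forall>m. \<forall>X\<in>DM m. \<exists>n (f :: nat \<Rightarrow> 'a \<Rightarrow> 'b) (i :: nat \<Rightarrow> nat) Y.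
           (\<forall>j<n. f j \<in> Es) \<and> (\<forall>j<n. i j < m) \<and> Y \<in> DN n \<and>
           X = {as \<in> tuples m. map (\<lambda>j. f j (as ! i j)) [0..<n] \<in> Y})"

definition K_free :: "'v set \<Rightarrow> 'w set \<Rightarrow> ('v \<Rightarrow> 'w \<Rightarrow> bool) \<Rightarrow> nat \<Rightarrow> nat \<Rightarrow> bool" where
  "K_free A B E m n \<longleftrightarrow>
     \<not> (\<exists>A' B'. A' \<subseteq> A \<and> B' \<subseteq> B \<and> finite A' \<and> finite B' \<and>
               card A' = m \<and> card B' = n \<and> (\<forall>a\<in>A'. \<forall>b\<in>B'. E a b))"

definition edges :: "'v set \<Rightarrow> 'w set \<Rightarrow> ('v \<Rightarrow> 'w \<Rightarrow> bool) \<Rightarrow> ('v \<times> 'w) set" where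
  "edges A B E = {(a, b). a \<in> A \<and> b \<in> B \<and> E a b}"

definition near_linear_zb :: "'v set \<Rightarrow> 'w set \<Rightarrow> ('v \<Rightarrow> 'w \<Rightarrow> bool) \<Rightarrow> bool" where
  "near_linear_zb V W E \<longleftrightarrow>
     (\<forall>(m::nat). \<forall>(\<epsilon>::real) > 0. \<exists>(c::real) > 0. \<forall>A B.
        finite A \<and> A \<subseteq> V \<and> finite B \<and> B \<subseteq> W \<and> K_free A B E m m \<longrightarrow>
        real (card (edges A B E)) \<le> c * real (card A + card B) powr (1 + \<epsilon>))"

definition struct_near_linear_zb :: "(nat \<Rightarrow> 'a list set set) \<Rightarrow> bool" where
  "struct_near_linear_zb D \<longleftrightarrow>
     (\<forall>k l V W E. V \<in> D k \<and> W \<in> D l \<and> E \<in> D (k + l) \<longrightarrow>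
        near_linear_zb V W (\<lambda>v w. v @ w \<in> E))"

end

theory Submission
  imports Defs
begin

lemma isD_sub: assumes "is_structure D" "X \<in> D m" shows "X \<subseteq> tuples m"
proof -
  have h: "\<forall>m. \<forall>X\<in>D m. X \<subseteq> tuples m" using assms(1) unfolding is_structure_def by (elim conjE) assumption
  show ?thesis using h assms(2) by blast
qed
lemma isD_tup: assumes "is_structure D" shows "tuples m \<in> D m"
proof -
  have "\<forall>m. tuples m \<in> D m" using assms(1) unfolding is_structure_def by (elim conjE) assumption
  then show ?thesis by (rule spec)
qed
lemma isD_diag: "is_structure D \<Longrightarrow> {[x, x] | x. True} \<in> D 2"
  unfolding is_structure_def by (elim conjE) assumption
lemma isD_subst: assumes "is_structure D" "X \<in> D m" "\<forall>j<m. \<sigma> j < n" shows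
        "{ys \<in> tuples n. map (\<lambda>j. ys ! \<sigma> j) [0..<m] \<in> X} \<in> D n"
proof -
  have h: "\<forall>m n (\<sigma>::nat \<Rightarrow> nat). \<forall>X\<in>D m. (\<forall>j<m. \<sigma> j < n) \<longrightarrow>
        {ys \<in> tuples n. map (\<lambda>j. ys ! \<sigma> j) [0..<m] \<in> X} \<in> D n"
    using assms(1) unfolding is_structure_def by (elim conjE) assumption
  show ?thesis by (rule h[rule_format, OF assms(2) assms(3)[rule_format]])
qed

lemma transfer_zb:
  assumes nl: "near_linear_zb V' W' E'"
    and GV: "G ` V \<subseteq> V'" and HW: "H ` W \<subseteq> W'"
    and iG: "inj_on G V" and iH: "inj_on H W"
    and eq: "\<And>v w. v \<in> V \<Longrightarrow> w \<in> W \<Longrightarrow> E v w \<longleftrightarrow> E' (G v) (H w)"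
  shows "near_linear_zb V W E"
  unfolding near_linear_zb_def
proof (intro allI impI)
  fix m :: nat and \<epsilon> :: real assume "\<epsilon> > 0"
  then obtain c where c: "c > 0" and cb: "\<And>A B. finite A \<and> A \<subseteq> V' \<and> finite B \<and> B \<subseteq> W' \<and> K_free A B E' m m \<Longrightarrow>
        real (card (edges A B E')) \<le> c * real (card A + card B) powr (1 + \<epsilon>)"
    using nl unfolding near_linear_zb_def by blast
  show "\<exists>c>0. \<forall>A B. finite A \<and> A \<subseteq> V \<and> finite B \<and> B \<subseteq> W \<and> K_free A B E m m \<longrightarrow>
        real (card (edges A B E)) \<le> c * real (card A + card B) powr (1 + \<epsilon>)"
  proof (intro exI[of _ c] conjI c allI impI)
    fix A B assume h: "finite A \<and> A \<subseteq> V \<and> finite B \<and> B \<subseteq> W \<and> K_free A B E m m"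
    have iA: "inj_on G A" using iG h inj_on_subset by blast
    have iB: "inj_on H B" using iH h inj_on_subset by blast
    have kf: "K_free (G ` A) (H ` B) E' m m"
      unfolding K_free_def
    proof
      assume "\<exists>A' B'. A' \<subseteq> G ` A \<and> B' \<subseteq> H ` B \<and> finite A' \<and> finite B' \<and>
               card A' = m \<and> card B' = m \<and> (\<forall>a\<in>A'. \<forall>b\<in>B'. E' a b)"
      then obtain A' B' where a: "A' \<subseteq> G ` A" "B' \<subseteq> H ` B" "finite A'" "finite B'"
        "card A' = m" "card B' = m" "\<forall>a\<in>A'. \<forall>b\<in>B'. E' a b" by blast
      let ?A0 = "inv_into A G ` A'" and ?B0 = "inv_into B H ` B'"
      have "card ?A0 = m" using a(1,5) inj_on_inv_into[OF a(1)] card_image by metis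
      moreover have "card ?B0 = m" using a(2,6) inj_on_inv_into[OF a(2)] card_image by metis
      moreover have "?A0 \<subseteq> A" using a(1) by (auto intro!: inv_into_into)
      moreover have "?B0 \<subseteq> B" using a(2) by (auto intro!: inv_into_into)
      moreover have "\<forall>x\<in>?A0. \<forall>y\<in>?B0. E x y"
      proof (intro ballI)
        fix x y assume x: "x \<in> ?A0" and y: "y \<in> ?B0"
        then obtain x' y' where xy: "x' \<in> A'" "y' \<in> B'" "x = inv_into A G x'" "y = inv_into B H y'" by blast
        have "G x = x'" using xy(1,3) a(1) f_inv_into_f by (metis subsetD)
        moreover have "H y = y'" using xy(2,4) a(2) f_inv_into_f by (metis subsetD)
        moreover have "x \<in> A" "y \<in> B" using xy a(1,2) by (auto intro!: inv_into_into)
        ultimately show "E x y" using eq a(7) xy h by blast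
      qed
      moreover have "finite ?A0" "finite ?B0" using a(3,4) by auto
      ultimately have "\<not> K_free A B E m m" unfolding K_free_def by blast
      then show False using h by blast
    qed
    have ed: "edges (G ` A) (H ` B) E' = (\<lambda>(a,b). (G a, H b)) ` edges A B E"
    proof (rule equalityI)
      show "edges (G ` A) (H ` B) E' \<subseteq> (\<lambda>(a,b). (G a, H b)) ` edges A B E"
      proof
        fix z assume "z \<in> edges (G ` A) (H ` B) E'"
        then obtain x y where xy: "x \<in> A" "y \<in> B" "z = (G x, H y)" "E' (G x) (H y)"
          unfolding edges_def by auto
        hence "E x y" using eq h by blast
        hence "(x, y) \<in> edges A B E" using xy unfolding edges_def by simp
        then show "z \<in> (\<lambda>(a,b). (G a, H b)) ` edges A B E" using xy(3) by (auto intro!: rev_image_eqI)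
      qed
    next
      show "(\<lambda>(a,b). (G a, H b)) ` edges A B E \<subseteq> edges (G ` A) (H ` B) E'"
        unfolding edges_def using h eq by auto
    qed
    have ie: "inj_on (\<lambda>(a,b). (G a, H b)) (edges A B E)"
      using iA iB unfolding edges_def inj_on_def by auto
    have "card (edges A B E) = card (edges (G ` A) (H ` B) E')"
      unfolding ed using ie by (simp add: card_image)
    moreover have "card (G ` A) = card A" using iA by (simp add: card_image)
    moreover have "card (H ` B) = card B" using iB by (simp add: card_image)
    moreover have "real (card (edges (G ` A) (H ` B) E')) \<le> c * real (card (G ` A) + card (H ` B)) powr (1 + \<epsilon>)"
    proof (rule cb, intro conjI)
      show "G ` A \<subseteq> V'" using GV h by (meson image_mono order_trans)
      show "H ` B \<subseteq> W'" using HW h by (meson image_mono order_trans)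
    qed (use h kf in auto)
    ultimately show "real (card (edges A B E)) \<le> c * real (card A + card B) powr (1 + \<epsilon>)"
      by (simp only:)
  qed
qed

theorem lemma3p4:
  fixes DM :: "nat \<Rightarrow> 'a list set set" and DN :: "nat \<Rightarrow> 'b list set set"
  assumes "is_structure DM" and "is_structure DN"
    and "struct_near_linear_zb DN"
    and "locally_trace_defines DN DM"
  shows "struct_near_linear_zb DM"
  unfolding struct_near_linear_zb_def
proof (intro allI impI)
  fix k l V W E assume VWE: "V \<in> DM k \<and> W \<in> DM l \<and> E \<in> DM (k + l)"
  have Vt: "V \<subseteq> tuples k" and Wt: "W \<subseteq> tuples l"
    using isD_sub[OF assms(1)] VWE by blast+
  obtain Es :: "('a \<Rightarrow> 'b) set" where Es: "\<forall>m. \<forall>X\<in>DM m. \<exists>n (f :: nat \<Rightarrow> 'a \<Rightarrow> 'b) (i :: nat \<Rightarrow> nat) Y.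
           (\<forall>j<n. f j \<in> Es) \<and> (\<forall>j<n. i j < m) \<and> Y \<in> DN n \<and>
           X = {as \<in> tuples m. map (\<lambda>j. f j (as ! i j)) [0..<n] \<in> Y}"
    using assms(4) unfolding locally_trace_defines_def by blast
  have EE: "E \<in> DM (k+l)" using VWE by blast
  obtain n f i Y where fiY0: "\<forall>j<n. f j \<in> Es" and fiY: "\<forall>j<n. i j < k + l" "Y \<in> DN n"
    "E = {as \<in> tuples (k+l). map (\<lambda>j. f j (as ! i j)) [0..<n] \<in> Y}"
    using Es[rule_format, OF EE] by iprover
  have D2: "{[x, x] | x. True} \<in> DM 2" using isD_diag[OF assms(1)] .
  obtain n0 f' i' Y' where fiY0': "\<forall>j<n0. f' j \<in> Es" and fiY': "\<forall>j<n0. i' j < 2" and Y'D: "Y' \<in> DN n0" and Del: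
    "{[x, x] | x. True} = {as \<in> tuples 2. map (\<lambda>j. f' j (as ! i' j)) [0..<n0] \<in> Y'}"
    using Es[rule_format, OF D2] by iprover
  define e where "e x = map (\<lambda>j. f' j x) [0..<n0]" for x
  have einj: "x = y" if "e x = e y" for x y
  proof -
    have fe: "f' j x = f' j y" if "j < n0" for j
      proof -
        have "e x ! j = e y ! j" using \<open>e x = e y\<close> by simp
        then show ?thesis using that unfolding e_def by simp
      qed
    have "[x,x] \<in> {[x, x] | x. True}" by blast
    hence inY: "map (\<lambda>j. f' j ([x,x] ! i' j)) [0..<n0] \<in> Y'" using Del by blast
    have eqm: "map (\<lambda>j. f' j ([x,y] ! i' j)) [0..<n0] = map (\<lambda>j. f' j ([x,x] ! i' j)) [0..<n0]"
    proof (rule map_cong[OF refl])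
      fix j assume "j \<in> set [0..<n0]"
      hence j: "j < n0" by simp
      hence "i' j < 2" using fiY' by blast
      hence "i' j = 0 \<or> i' j = 1" by linarith
      then show "f' j ([x,y] ! i' j) = f' j ([x,x] ! i' j)" using fe[OF j] by auto
    qed
    have "map (\<lambda>j. f' j ([x,y] ! i' j)) [0..<n0] \<in> Y'" using inY by (simp only: eqm)
    moreover have "[x,y] \<in> tuples 2" by (simp add: tuples_def)
    ultimately have "[x,y] \<in> {as \<in> tuples 2. map (\<lambda>j. f' j (as ! i' j)) [0..<n0] \<in> Y'}"
      by (intro CollectI conjI)
    hence "[x,y] \<in> {[x, x] | x. True}" by (simp only: Del)
    then show ?thesis by auto
  qed
  define p where "p = n + k * n0"
  define q where "q = n + l * n0"
  define G where "G v = map (\<lambda>j. f j (v ! i j)) [0..<n] @ map (\<lambda>t. f' (t mod n0) (v ! (t div n0))) [0..<k*n0]" for v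
  define H where "H w = map (\<lambda>j. f j (w ! (i j - k))) [0..<n] @ map (\<lambda>t. f' (t mod n0) (w ! (t div n0))) [0..<l*n0]" for w
  define \<sigma> where "\<sigma> j = (if i j < k then j else p + j)" for j
  define E2 where "E2 = {ys \<in> tuples (p+q). map (\<lambda>j. ys ! \<sigma> j) [0..<n] \<in> Y}"
  have E2D: "E2 \<in> DN (p+q)"
  proof -
    have "\<forall>j<n. \<sigma> j < p + q" unfolding \<sigma>_def p_def q_def by auto
    then show ?thesis unfolding E2_def by (rule isD_subst[OF assms(2) fiY(2)])
  qed
  have tD: "tuples p \<in> DN p" "tuples q \<in> DN q" using isD_tup[OF assms(2)] by blast+
  have nl: "near_linear_zb (tuples p) (tuples q) (\<lambda>v w. v @ w \<in> E2)"
    using assms(3) E2D tD unfolding struct_near_linear_zb_def by blast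
  have lenG: "length (G v) = p" for v unfolding G_def p_def by simp
  have lenH: "length (H w) = q" for w unfolding H_def q_def by simp
  have injgen: "v1 = v2" if "length v1 = K" "length v2 = K"
     "map (\<lambda>t. f' (t mod n0) (v1 ! (t div n0))) [0..<K*n0] = map (\<lambda>t. f' (t mod n0) (v2 ! (t div n0))) [0..<K*n0]"
     for v1 v2 :: "'a list" and K
  proof (rule nth_equalityI)
    show "length v1 = length v2" using that by simp
    fix r assume r: "r < length v1"
    have "e (v1 ! r) = e (v2 ! r)" unfolding e_def
    proof (rule nth_equalityI)
      show "length (map (\<lambda>j. f' j (v1 ! r)) [0..<n0]) = length (map (\<lambda>j. f' j (v2 ! r)) [0..<n0])" by simp
      fix s assume "s < length (map (\<lambda>j. f' j (v1 ! r)) [0..<n0])"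
      hence s: "s < n0" by simp
      define t where "t = r * n0 + s"
      have rK: "r + 1 \<le> K" using r that by simp
      have "t < (r+1) * n0" using s unfolding t_def by simp
      also have "\<dots> \<le> K * n0" using rK by (rule mult_right_mono) simp
      finally have tl: "t < K * n0" .
      have td: "t div n0 = r" "t mod n0 = s" unfolding t_def using s by auto
      have "map (\<lambda>t. f' (t mod n0) (v1 ! (t div n0))) [0..<K*n0] ! t = map (\<lambda>t. f' (t mod n0) (v2 ! (t div n0))) [0..<K*n0] ! t"
        using that(3) by (simp only:)
      hence "f' s (v1 ! r) = f' s (v2 ! r)" using tl td by simp
      then show "map (\<lambda>j. f' j (v1 ! r)) [0..<n0] ! s = map (\<lambda>j. f' j (v2 ! r)) [0..<n0] ! s" using s by simp
    qed
    then show "v1 ! r = v2 ! r" by (rule einj)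
  qed
  have iG: "inj_on G V"
  proof (rule inj_onI)
    fix v1 v2 assume "v1 \<in> V" "v2 \<in> V" "G v1 = G v2"
    then show "v1 = v2" using injgen[of v1 k v2] Vt unfolding G_def tuples_def by auto
  qed
  have iH: "inj_on H W"
  proof (rule inj_onI)
    fix v1 v2 assume "v1 \<in> W" "v2 \<in> W" "H v1 = H v2"
    then show "v1 = v2" using injgen[of v1 l v2] Wt unfolding H_def tuples_def by auto
  qed
  have eq: "(v @ w \<in> E) \<longleftrightarrow> (G v @ H w \<in> E2)" if v: "v \<in> V" and w: "w \<in> W" for v w
  proof -
    have lv: "length v = k" and lw: "length w = l" using v w Vt Wt unfolding tuples_def by auto
    have mq: "map (\<lambda>j. (G v @ H w) ! \<sigma> j) [0..<n] = map (\<lambda>j. f j ((v @ w) ! i j)) [0..<n]"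
    proof (rule map_cong[OF refl])
      fix j assume "j \<in> set [0..<n]"
      hence j: "j < n" by simp
      show "(G v @ H w) ! \<sigma> j = f j ((v @ w) ! i j)"
      proof (cases "i j < k")
        case True
        then show ?thesis using j lv lenG[of v] unfolding \<sigma>_def p_def
          by (simp add: nth_append G_def)
      next
        case False
        then show ?thesis using j lv lenG[of v] unfolding \<sigma>_def
          by (simp add: nth_append H_def)
      qed
    qed
    moreover have "v @ w \<in> tuples (k+l)" "G v @ H w \<in> tuples (p+q)"
      using lv lw lenG lenH unfolding tuples_def by auto
    ultimately show ?thesis unfolding fiY(3) E2_def mem_Collect_eq mq by blast
  qed
  show "near_linear_zb V W (\<lambda>v w. v @ w \<in> E)"
    by (rule transfer_zb[OF nl _ _ iG iH eq]) (auto simp: tuples_def lenG lenH)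
qed

end
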